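(* Let $\succ=(\succ_s)_{s\in S}$ be a priority profile such that every $\succ_s$ is a partial order on $I$. Suppose $K\ge 1$ and $\mu_1,\dots,\mu_K$ are stable matchings for $\succ$ such that $\mu_{k'}$ Pareto dominates $\mu_k$ for all $1\le k<k'\le K$. Then there exists an extension profile $\succ^*\in\mathcal{E}(\succ)$ such that every one of $\mu_1,\dots,\mu_K$ is stable for $\succ^*$.
   Context: All binary relations $B$ considered are asymmetric: $(x,y)\in B$ implies $(y,x)\notin B$. A binary relation $B$ on $X$ is complete if $x\neq y$ implies $(x,y)\in B$ or $(y,x)\in B$; negatively transitive if $(x,y)\notin B$ and $(y,z)\notin B$ imply $(x,z)\notin B$; transitive if $(x,y),(y,z)\in B$ imply $(x,z)\in B$; acyclic if for all $K\ge2$ and $x_0,\dots,x_K\in X$, [$(x_{k-1},x_k)\in B$ and $(x_k,x_{k-1})\notin B$ for all $k=1,\dots,K$] implies $(x_K,x_0)\notin B$. A partial order is an asymmetric transitive relation; a weak order is a negatively transitive partial order; a total order is a complete weak order. $\mathcal{A},\mathcal{P},\mathcal{W},\mathcal{T}$ denote the sets of acyclic, partial order, weak order, total order (asymmetric) relations on $I$. School choice setup: $I$ is a finite set of students with $|I|\ge 3$, $S$ a finite set of schools. Each student $i$ has a total order $P_i$ on $S\cup\{\emptyset\}$ ($\emptyset$ = outside option); $sR_is'$ means $sP_is'$ or $s=s'$. Each school $s$ has capacity $q_s\in\mathbb{Z}_{++}$ and a priority relation $\succ_s$, an asymmetric binary relation on $I$ ($(i,j)\in\succ_s$: $i$ has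 higher priority than $j$ at $s$). A matching $\mu$ assigns each $i$ to $\mu(i)\in S\cup\{\emptyset\}$, with $\mu(s)=\{i:\mu(i)=s\}$. $\mu$ is individually rational if $\mu(i)R_i\emptyset$ for all $i$; non-wasteful if $sP_i\mu(i)$ implies $|\mu(s)|=q_s$; fair for $\succ$ if there are no $s$, $j\in\mu(s)$, $i\notin\mu(s)$ with $sR_i\mu(i)$ and $(i,j)\in\succ_s$; stable for $\succ$ if individually rational, non-wasteful and fair for $\succ$ (capacities $|\mu(s)|\le q_s$ are required of matchings). $\mu$ is Pareto dominated by $\mu'$ if $\mu'(i)R_i\mu(i)$ for all $i$ and $\mu'(i)P_i\mu(i)$ for some $i$. An extension of $\succ_s$ is a total order $\hat\succ_s$ on $I$ with $\succ_s\subseteq\hat\succ_s$; $E(\succ_s)$ is the set of extensions of $\succ_s$ and $\mathcal{E}(\succ)$ the set of profiles $(\succ'_s)_{s\in S}$ with $\succ'_s\in E(\succ_s)$ for all $s$. *)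

theory Defs
  imports Main
begin

(* Binary relations are sets of pairs; (x,y) \<in> B means x B y. *)

definition asym_rel :: "('a \<times> 'a) set \<Rightarrow> bool" where
  "asym_rel B \<longleftrightarrow> (\<forall>x y. (x,y) \<in> B \<longrightarrow> (y,x) \<notin> B)"

definition complete_rel :: "('a \<times> 'a) set \<Rightarrow> bool" where
  "complete_rel B \<longleftrightarrow> (\<forall>x y. x \<noteq> y \<longrightarrow> (x,y) \<in> B \<or> (y,x) \<in> B)"

definition neg_trans_rel :: "('a \<times> 'a) set \<Rightarrow> bool" where
  "neg_trans_rel B \<longleftrightarrow> (\<forall>x y z. (x,y) \<notin> B \<longrightarrow> (y,z) \<notin> B \<longrightarrow> (x,z) \<notin> B)"

definition trans_rel :: "('a \<times> 'a) set \<Rightarrow> bool" where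
  "trans_rel B \<longleftrightarrow> (\<forall>x y z. (x,y) \<in> B \<longrightarrow> (y,z) \<in> B \<longrightarrow> (x,z) \<in> B)"

definition partial_order_rel :: "('a \<times> 'a) set \<Rightarrow> bool" where
  "partial_order_rel B \<longleftrightarrow> asym_rel B \<and> trans_rel B"

definition weak_order_rel :: "('a \<times> 'a) set \<Rightarrow> bool" where
  "weak_order_rel B \<longleftrightarrow> partial_order_rel B \<and> neg_trans_rel B"

definition total_order_rel :: "('a \<times> 'a) set \<Rightarrow> bool" where
  "total_order_rel B \<longleftrightarrow> weak_order_rel B \<and> complete_rel B"

definition extensions :: "('a \<times> 'a) set \<Rightarrow> ('a \<times> 'a) set set" where
  "extensions B = {B'. total_order_rel B' \<and> B \<subseteq> B'}"

definition ext_profiles :: "('s \<Rightarrow> ('i \<times> 'i) set) \<Rightarrow> ('s \<Rightarrow> ('i \<times> 'i) set) set" where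
  "ext_profiles pr = {pr'. \<forall>s. pr' s \<in> extensions (pr s)}"

(* School choice. Schools: type 's; S \<union> {\<emptyset>} is 's option with None = outside option.
   P i : strict preference of student i on 's option. *)

definition weak_pref :: "('i \<Rightarrow> ('s option \<times> 's option) set) \<Rightarrow> 'i \<Rightarrow> 's option \<Rightarrow> 's option \<Rightarrow> bool" where
  "weak_pref P i a b \<longleftrightarrow> (a,b) \<in> P i \<or> a = b"

definition assigned :: "('i \<Rightarrow> 's option) \<Rightarrow> 's \<Rightarrow> 'i set" where
  "assigned \<mu> s = {i. \<mu> i = Some s}"

definition is_matching :: "('s \<Rightarrow> nat) \<Rightarrow> ('i \<Rightarrow> 's option) \<Rightarrow> bool" where
  "is_matching q \<mu> \<longleftrightarrow> (\<forall>s. card (assigned \<mu> s) \<le> q s)"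

definition indiv_rational :: "('i \<Rightarrow> ('s option \<times> 's option) set) \<Rightarrow> ('i \<Rightarrow> 's option) \<Rightarrow> bool" where
  "indiv_rational P \<mu> \<longleftrightarrow> (\<forall>i. weak_pref P i (\<mu> i) None)"

definition non_wasteful :: "('i \<Rightarrow> ('s option \<times> 's option) set) \<Rightarrow> ('s \<Rightarrow> nat) \<Rightarrow> ('i \<Rightarrow> 's option) \<Rightarrow> bool" where
  "non_wasteful P q \<mu> \<longleftrightarrow> (\<forall>i s. (Some s, \<mu> i) \<in> P i \<longrightarrow> card (assigned \<mu> s) = q s)"

definition fair :: "('i \<Rightarrow> ('s option \<times> 's option) set) \<Rightarrow> ('s \<Rightarrow> ('i \<times> 'i) set) \<Rightarrow> ('i \<Rightarrow> 's option) \<Rightarrow> bool" where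
  "fair P pr \<mu> \<longleftrightarrow> \<not> (\<exists>s i j. j \<in> assigned \<mu> s \<and> i \<notin> assigned \<mu> s \<and>
                        weak_pref P i (Some s) (\<mu> i) \<and> (i,j) \<in> pr s)"

definition stable :: "('i \<Rightarrow> ('s option \<times> 's option) set) \<Rightarrow> ('s \<Rightarrow> nat) \<Rightarrow> ('s \<Rightarrow> ('i \<times> 'i) set) \<Rightarrow> ('i \<Rightarrow> 's option) \<Rightarrow> bool" where
  "stable P q pr \<mu> \<longleftrightarrow> is_matching q \<mu> \<and> indiv_rational P \<mu> \<and> non_wasteful P q \<mu> \<and> fair P pr \<mu>"

definition pareto_dominated_by :: "('i \<Rightarrow> ('s option \<times> 's option) set) \<Rightarrow> ('i \<Rightarrow> 's option) \<Rightarrow> ('i \<Rightarrow> 's option) \<Rightarrow> bool" where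
  "pareto_dominated_by P \<mu> \<mu>' \<longleftrightarrow> (\<forall>i. weak_pref P i (\<mu>' i) (\<mu> i)) \<and> (\<exists>i. (\<mu>' i, \<mu> i) \<in> P i)"

end

theory Submission imports Defs begin

lemma total_ext:
  fixes R :: "('a::finite \<times> 'a) set"
  assumes "asym_rel R" "trans_rel R"
  shows "\<exists>T. total_order_rel T \<and> R \<subseteq> T"
proof -
  let ?A = "{T. R \<subseteq> T \<and> asym_rel T \<and> trans_rel T}"
  have "finite ?A" by simp
  moreover have "R \<in> ?A" using assms by simp
  ultimately obtain T where T: "T \<in> ?A" and mx: "\<forall>b\<in>?A. T \<le> b \<longrightarrow> T = b"
    using finite_has_maximal[of ?A] by blast
  have as: "asym_rel T" and tr: "trans_rel T" and RT: "R \<subseteq> T" using T by auto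
  have comp: "complete_rel T"
    unfolding complete_rel_def
  proof (intro allI impI, rule ccontr)
    fix x y assume ne: "x \<noteq> y" and nc: "\<not> ((x, y) \<in> T \<or> (y, x) \<in> T)"
    define T' where "T' = T \<union> {(a,b). (a = x \<or> (a,x) \<in> T) \<and> (y = b \<or> (y,b) \<in> T)}"
    have "asym_rel T'"
      using as tr nc ne unfolding asym_rel_def trans_rel_def T'_def by blast
    moreover have "trans_rel T'"
      using as tr nc ne unfolding asym_rel_def trans_rel_def T'_def by blast
    moreover have "R \<subseteq> T'" using RT T'_def by auto
    ultimately have "T' \<in> ?A" by simp
    moreover have "T \<le> T'" unfolding T'_def by auto
    ultimately have "T = T'" using mx by blast
    moreover have "(x,y) \<in> T'" unfolding T'_def by auto
    ultimately show False using nc by simp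
  qed
  have "neg_trans_rel T"
    using as tr comp unfolding asym_rel_def trans_rel_def complete_rel_def neg_trans_rel_def
    by metis
  then show ?thesis using as tr comp RT
    unfolding total_order_rel_def weak_order_rel_def partial_order_rel_def by blast
qed
theorem theorem1:
  fixes P :: "'i::finite \<Rightarrow> ('s::finite option \<times> 's option) set"
    and q :: "'s \<Rightarrow> nat"
    and pr :: "'s \<Rightarrow> ('i \<times> 'i) set"
    and \<mu> :: "nat \<Rightarrow> ('i \<Rightarrow> 's option)"
    and K :: nat
  assumes students: "card (UNIV :: 'i set) \<ge> 3"
    and prefs: "\<forall>i. total_order_rel (P i)"
    and cap: "\<forall>s. q s > 0"
    and prio: "\<forall>s. partial_order_rel (pr s)"
    and K: "K \<ge> 1"
    and stab: "\<forall>k\<in>{1..K}. stable P q pr (\<mu> k)"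
    and dom: "\<forall>k k'. 1 \<le> k \<and> k < k' \<and> k' \<le> K \<longrightarrow> pareto_dominated_by P (\<mu> k) (\<mu> k')"
  shows "\<exists>pr' \<in> ext_profiles pr. \<forall>k\<in>{1..K}. stable P q pr' (\<mu> k)"
proof -
  have Pas: "(a,b) \<in> P i \<Longrightarrow> (b,a) \<notin> P i" for i a b
    using prefs unfolding total_order_rel_def weak_order_rel_def partial_order_rel_def asym_rel_def by blast
  have Ptr: "(a,b) \<in> P i \<Longrightarrow> (b,c) \<in> P i \<Longrightarrow> (a,c) \<in> P i" for i a b c
    using prefs unfolding total_order_rel_def weak_order_rel_def partial_order_rel_def trans_rel_def by blast
  have pras: "(a,b) \<in> pr s \<Longrightarrow> (b,a) \<notin> pr s" for s a b
    using prio unfolding partial_order_rel_def asym_rel_def by blast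
  have prtr: "(a,b) \<in> pr s \<Longrightarrow> (b,c) \<in> pr s \<Longrightarrow> (a,c) \<in> pr s" for s a b c
    using prio unfolding partial_order_rel_def trans_rel_def by blast
  have wp: "weak_pref P v (\<mu> k' v) (\<mu> k v)" if "1 \<le> k" "k < k'" "k' \<le> K" for v k k'
    using dom that unfolding pareto_dominated_by_def by blast
  have fairk: "\<not> (\<mu> k j = Some s \<and> \<mu> k i \<noteq> Some s \<and> (Some s, \<mu> k i) \<in> P i \<and> (i,j) \<in> pr s)"
    if "1 \<le> k" "k \<le> K" for k i j s
  proof -
    have "fair P pr (\<mu> k)" using stab that by (simp add: stable_def)
    then show ?thesis unfolding fair_def weak_pref_def assigned_def by blast
  qed
  have envy_mono: "(Some s, \<mu> k v) \<in> P v"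
    if "1 \<le> k" "k \<le> k'" "k' \<le> K" "(Some s, \<mu> k' v) \<in> P v" for s k k' v
  proof (cases "k = k'")
    case False
    then have "weak_pref P v (\<mu> k' v) (\<mu> k v)" using wp[where k=k and k'=k' and v=v] that by simp
    then show ?thesis using that(4) Ptr[of "Some s" "\<mu> k' v" v "\<mu> k v"] unfolding weak_pref_def by auto
  qed (use that in simp)
  have at_no_envy: "(Some s, \<mu> k' x) \<notin> P x"
    if "1 \<le> k" "k \<le> k'" "k' \<le> K" "\<mu> k x = Some s" for s k k' x
  proof (cases "k = k'")
    case True then show ?thesis using that(4) Pas[of "Some s" "Some s" x] by auto
  next
    case False
    then have "weak_pref P x (\<mu> k' x) (\<mu> k x)" using wp[where k=k and k'=k' and v=x] that by simp
    then show ?thesis using that(4) Pas[of "Some s" "\<mu> k' x" x] unfolding weak_pref_def by auto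
  qed
  define L where "L s x v \<longleftrightarrow> (\<exists>k. 1 \<le> k \<and> k \<le> K \<and> \<mu> k x = Some s \<and> (Some s, \<mu> k v) \<in> P v)" for s x v
  have envy_not_at: "(Some s, \<mu> k v) \<in> P v \<Longrightarrow> \<mu> k v \<noteq> Some s" for s k v
    using Pas[of "Some s" "\<mu> k v" v] by auto
  have L_trans: "L s x w" if a: "L s x v" "L s v w" for s x v w
  proof -
    obtain k where k: "1 \<le> k" "k \<le> K" "\<mu> k x = Some s" "(Some s, \<mu> k v) \<in> P v"
      using a(1) unfolding L_def by blast
    obtain k2 where k2: "1 \<le> k2" "k2 \<le> K" "\<mu> k2 v = Some s" "(Some s, \<mu> k2 w) \<in> P w"
      using a(2) unfolding L_def by blast
    have "k < k2"
    proof (rule ccontr)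
      assume "\<not> k < k2"
      then show False using at_no_envy[where k=k2 and k'=k and s=s and x=v] k k2 by simp
    qed
    then have "(Some s, \<mu> k w) \<in> P w" using envy_mono[where k=k and k'=k2 and s=s and v=w] k k2 by simp
    then show ?thesis using k L_def by blast
  qed
  have L_pr_L: "L s x w" if a: "L s x y" "(y,v) \<in> pr s" "L s v w" for s x y v w
  proof -
    obtain k where k: "1 \<le> k" "k \<le> K" "\<mu> k x = Some s" "(Some s, \<mu> k y) \<in> P y"
      using a(1) unfolding L_def by blast
    obtain k2 where k2: "1 \<le> k2" "k2 \<le> K" "\<mu> k2 v = Some s" "(Some s, \<mu> k2 w) \<in> P w"
      using a(3) unfolding L_def by blast
    have "k < k2"
    proof (rule ccontr)
      assume "\<not> k < k2"
      then have "(Some s, \<mu> k2 y) \<in> P y" using envy_mono[where k=k2 and k'=k and s=s and v=y] k k2 by simp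
      then show False using fairk[where k=k2 and j=v and s=s and i=y] k2 envy_not_at a(2) by blast
    qed
    then have "(Some s, \<mu> k w) \<in> P w" using envy_mono[where k=k and k'=k2 and s=s and v=w] k k2 by simp
    then show ?thesis using k L_def by blast
  qed
  have L_irr: "\<not> L s u u" for s u
    using at_no_envy L_def by (metis order_refl)
  have pr_L: "\<not> ((u,x) \<in> pr s \<and> L s x u)" for s u x
  proof
    assume a: "(u,x) \<in> pr s \<and> L s x u"
    then obtain k where k: "1 \<le> k" "k \<le> K" "\<mu> k x = Some s" "(Some s, \<mu> k u) \<in> P u"
      using L_def by blast
    show False using fairk[where k=k and j=x and s=s and i=u] k envy_not_at[OF k(4)] a by blast
  qed
  define D where "D s = pr s \<union> {(j,i). L s j i}" for s
  define J where "J s x v \<longleftrightarrow> L s x v \<or> (\<exists>y. L s x y \<and> (y,v) \<in> pr s)" for s x v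
  define Inv where "Inv s u v \<longleftrightarrow> (u,v) \<in> pr s \<or> (\<exists>x. (u = x \<or> (u,x) \<in> pr s) \<and> J s x v)" for s u v
  have J_step: "J s x w" if "J s x v" "(v,w) \<in> D s" for s x v w
  proof -
    have "(v,w) \<in> pr s \<or> L s v w" using that(2) D_def by blast
    moreover have "L s x v \<or> (\<exists>y. L s x y \<and> (y,v) \<in> pr s)" using that(1) J_def by blast
    ultimately show ?thesis
    proof (elim disjE exE conjE)
      assume "(v,w) \<in> pr s" "L s x v" then show ?thesis unfolding J_def by blast
    next
      assume "L s v w" "L s x v" then show ?thesis using L_trans unfolding J_def by blast
    next
      fix y assume "(v,w) \<in> pr s" "L s x y" "(y,v) \<in> pr s"
      then show ?thesis using prtr unfolding J_def by blast
    next
      fix y assume "L s v w" "L s x y" "(y,v) \<in> pr s"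
      then show ?thesis using L_pr_L unfolding J_def by blast
    qed
  qed
  have Inv_path: "Inv s u v" if "(u,v) \<in> (D s)\<^sup>+" for s u v
    using that
  proof (induction rule: trancl_induct)
    case (base y)
    then have "(u,y) \<in> pr s \<or> L s u y" using D_def by blast
    then show ?case unfolding Inv_def J_def by blast
  next
    case (step y z)
    show ?case
    proof (cases "(u,y) \<in> pr s")
      case True
      have "(y,z) \<in> pr s \<or> L s y z" using step(2) D_def by blast
      then show ?thesis
      proof
        assume "(y,z) \<in> pr s" then show ?thesis using True prtr Inv_def by blast
      next
        assume "L s y z" then have "J s y z" using J_def by blast
        then show ?thesis using True Inv_def by blast
      qed
    next
      case False
      then obtain x where "u = x \<or> (u,x) \<in> pr s" "J s x y" using step(3) Inv_def by blast
      then show ?thesis using J_step step(2) Inv_def by blast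
    qed
  qed
  have irr: "(u,u) \<notin> (D s)\<^sup>+" for s u
  proof
    assume "(u,u) \<in> (D s)\<^sup>+"
    then have "Inv s u u" by (rule Inv_path)
    then have "(u,u) \<in> pr s \<or> (\<exists>x. (u = x \<or> (u,x) \<in> pr s) \<and> J s x u)" using Inv_def by blast
    then show False
    proof (elim disjE exE conjE)
      assume "(u,u) \<in> pr s" then show False using pras by blast
    next
      fix x assume a: "u = x" "J s x u"
      then have "L s u u \<or> (\<exists>y. L s u y \<and> (y,u) \<in> pr s)" using J_def by blast
      then show False using L_irr pr_L by blast
    next
      fix x assume a: "(u,x) \<in> pr s" "J s x u"
      then have "L s x u \<or> (\<exists>y. L s x y \<and> (y,u) \<in> pr s)" using J_def by blast
      then show False
      proof (elim disjE exE conjE)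
        assume "L s x u" then show False using pr_L a by blast
      next
        fix y assume "L s x y" "(y,u) \<in> pr s"
        then have "(y,x) \<in> pr s" using prtr a by blast
        then show False using pr_L \<open>L s x y\<close> by blast
      qed
    qed
  qed
  have "\<exists>T. total_order_rel T \<and> (D s)\<^sup>+ \<subseteq> T" for s
  proof (rule total_ext)
    show "trans_rel ((D s)\<^sup>+)" unfolding trans_rel_def by auto
    show "asym_rel ((D s)\<^sup>+)" unfolding asym_rel_def using irr by (meson trancl_trans)
  qed
  then obtain T where T: "\<And>s. total_order_rel (T s) \<and> (D s)\<^sup>+ \<subseteq> T s" by metis
  have Tas: "(a,b) \<in> T s \<Longrightarrow> (b,a) \<notin> T s" for s a b
    using T unfolding total_order_rel_def weak_order_rel_def partial_order_rel_def asym_rel_def by blast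
  have DT: "D s \<subseteq> T s" for s using T[of s] r_into_trancl' by blast
  have "T \<in> ext_profiles pr"
    unfolding ext_profiles_def extensions_def using T DT D_def by blast
  moreover have "stable P q T (\<mu> k)" if "k \<in> {1..K}" for k
  proof -
    have "fair P T (\<mu> k)"
      unfolding fair_def
    proof
      assume "\<exists>s i j. j \<in> assigned (\<mu> k) s \<and> i \<notin> assigned (\<mu> k) s \<and>
                        weak_pref P i (Some s) (\<mu> k i) \<and> (i,j) \<in> T s"
      then obtain s i j where h: "\<mu> k j = Some s" "\<mu> k i \<noteq> Some s"
         "weak_pref P i (Some s) (\<mu> k i)" "(i,j) \<in> T s" unfolding assigned_def by blast
      then have "(Some s, \<mu> k i) \<in> P i" unfolding weak_pref_def by auto
      then have "L s j i" using h that L_def by auto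
      then have "(j,i) \<in> T s" using DT D_def by blast
      then show False using Tas h by blast
    qed
    then show ?thesis using stab that unfolding stable_def by blast
  qed
  ultimately show ?thesis by blast
qed

end
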